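(* Let $\mathbb{H}$ be a finite-dimensional complex Hilbert space with $\dim\mathbb{H}\ge2$, let $k,n$ be positive integers, let $\alpha,\beta$ be complex numbers with $|\alpha|^2+|\beta|^2=1$ and $|\beta|\ne1$, and let $|\phi\rangle\in\mathbb{H}$ be a fixed unit vector (independent of the input; known or unknown). For a pure state $\rho_\psi$ on $\mathbb{H}$ let $|\varphi\rangle\propto\alpha|\psi\rangle+\beta|\phi\rangle$. Then: (i) if $0<|\beta|<1$, there is no probabilistic quantum transformation $\mathcal{F}$ from $\mathbb{H}^{\otimes k}$ to $\mathbb{H}^{\otimes n}$ with $\mathcal{F}(\rho_\psi^{\otimes k})=\rho_\varphi^{\otimes n}$ for all pure states $\rho_\psi$ on $\mathbb{H}$; (ii) if $\beta=0$ and $n>k$, there is no probabilistic quantum transformation $\mathcal{F}$ from $\mathbb{H}^{\otimes k}$ to $\mathbb{H}^{\otimes n}$ with $\mathcal{F}(\rho_\psi^{\otimes k})=\rho_\psi^{\otimes n}$ for all pure states $\rho_\psi$; (iii) if $\beta=0$ and $n<k$, there is no unitary $U$ on $\mathbb{H}^{\otimes k}$ with $U\rho_\psi^{\otimes k}U^\dagger=\rho_\psi^{\otimes n}\otimes\rho_0^{\otimes(k-n)}$ for all pure states $\rho_\psi$, where $|0\rangle\in\mathbb{H}$ is a fixed unit vector.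
   Context: For a unit vector $|\psi\rangle$, $\rho_\psi=|\psi\rangle\langle\psi|$; $|\varphi\rangle\propto|\chi\rangle$ means $|\varphi\rangle$ is the normalization of $|\chi\rangle$ up to a global phase. A probabilistic quantum transformation from $\mathbb{H}_1$ to $\mathbb{H}_2$ is a completely positive, trace-non-increasing linear map from operators on $\mathbb{H}_1$ to operators on $\mathbb{H}_2$; $\mathcal{F}(\rho)=\sigma$ for pure states means $\mathcal{F}(\rho)=p\sigma$ for some $p>0$. *)

theory Defs
  imports "Jordan_Normal_Form.Matrix"
begin

text \<open>The Hilbert space H is modelled as complex^d (d = dim H); operators on
  H^{(tensor k)} are d^k x d^k complex matrices.  Tensor products are Kronecker
  products (first factor = most significant index).\<close>

definition cadj :: "complex mat \<Rightarrow> complex mat" where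
  "cadj A = mat (dim_col A) (dim_row A) (\<lambda>(i,j). cnj (A $$ (j,i)))"

definition ctrace :: "complex mat \<Rightarrow> complex" where
  "ctrace A = (\<Sum>i<dim_row A. A $$ (i,i))"

definition vnorm :: "complex vec \<Rightarrow> real" where
  "vnorm v = sqrt (\<Sum>i<dim_vec v. (cmod (v $ i))\<^sup>2)"

definition unit_vec_in :: "nat \<Rightarrow> complex vec \<Rightarrow> bool" where
  "unit_vec_in d v \<longleftrightarrow> v \<in> carrier_vec d \<and> vnorm v = 1"

definition proj :: "complex vec \<Rightarrow> complex mat" where
  "proj v = mat (dim_vec v) (dim_vec v) (\<lambda>(i,j). v $ i * cnj (v $ j))"

text \<open>normalization of a vector (used only for nonzero vectors)\<close>
definition normalize_vec :: "complex vec \<Rightarrow> complex vec" where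
  "normalize_vec v = complex_of_real (1 / vnorm v) \<cdot>\<^sub>v v"

definition kron :: "complex mat \<Rightarrow> complex mat \<Rightarrow> complex mat" where
  "kron A B = mat (dim_row A * dim_row B) (dim_col A * dim_col B)
     (\<lambda>(i,j). A $$ (i div dim_row B, j div dim_col B) * B $$ (i mod dim_row B, j mod dim_col B))"

primrec tpow :: "complex mat \<Rightarrow> nat \<Rightarrow> complex mat" where
  "tpow A 0 = 1\<^sub>m 1"
| "tpow A (Suc k) = kron A (tpow A k)"

definition psd :: "nat \<Rightarrow> complex mat \<Rightarrow> bool" where
  "psd n A \<longleftrightarrow> A \<in> carrier_mat n n \<and>
     (\<forall>v \<in> carrier_vec n. Im (conjugate v \<bullet> (A *\<^sub>v v)) = 0 \<and> Re (conjugate v \<bullet> (A *\<^sub>v v)) \<ge> 0)"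

definition unitary_mat :: "nat \<Rightarrow> complex mat \<Rightarrow> bool" where
  "unitary_mat n U \<longleftrightarrow> U \<in> carrier_mat n n \<and> U * cadj U = 1\<^sub>m n \<and> cadj U * U = 1\<^sub>m n"

text \<open>(id_m tensor F)(X): X is an (m*a)x(m*a) matrix viewed as an m x m block matrix
  with a x a blocks; F is applied blockwise.\<close>
definition ext_map :: "nat \<Rightarrow> nat \<Rightarrow> nat \<Rightarrow> (complex mat \<Rightarrow> complex mat) \<Rightarrow> complex mat \<Rightarrow> complex mat" where
  "ext_map m a b F X = mat (m * b) (m * b)
     (\<lambda>(i,j). F (mat a a (\<lambda>(r,s). X $$ ((i div b) * a + r, (j div b) * a + s))) $$ (i mod b, j mod b))"

text \<open>Probabilistic quantum transformation from operators on C^a to operators on C^b: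
  linear, completely positive, trace-non-increasing.\<close>
definition prob_qt :: "nat \<Rightarrow> nat \<Rightarrow> (complex mat \<Rightarrow> complex mat) \<Rightarrow> bool" where
  "prob_qt a b F \<longleftrightarrow>
     (\<forall>A \<in> carrier_mat a a. F A \<in> carrier_mat b b) \<and>
     (\<forall>A \<in> carrier_mat a a. \<forall>B \<in> carrier_mat a a. F (A + B) = F A + F B) \<and>
     (\<forall>A \<in> carrier_mat a a. \<forall>c. F (c \<cdot>\<^sub>m A) = c \<cdot>\<^sub>m F A) \<and>
     (\<forall>m>0. \<forall>X. psd (m * a) X \<longrightarrow> psd (m * b) (ext_map m a b F X)) \<and>
     (\<forall>\<rho>. psd a \<rho> \<longrightarrow> Re (ctrace (F \<rho>)) \<le> Re (ctrace \<rho>))"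

end

theory Submission
  imports Defs
begin


lemma root_sum_zero:
  fixes e :: int and N :: nat
  assumes "e \<noteq> 0" "\<bar>e\<bar> < int N"
  shows "(\<Sum>t<N. cis (2 * pi * real t * real_of_int e / real N)) = 0"
proof -
  define \<omega> where "\<omega> = cis (2 * pi * real_of_int e / real N)"
  have N0: "N > 0" using assms by linarith
  have ne: "\<omega> \<noteq> 1"
  proof
    assume "\<omega> = 1"
    then have "cos (2 * pi * real_of_int e / real N) = 1"
      by (auto simp: \<omega>_def complex_eq_iff)
    then obtain k :: int where k: "2 * pi * real_of_int e / real N = k * 2 * pi"
      by (auto simp: cos_one_2pi_int)
    then have "real_of_int e = real N * k" using N0 by (simp add: field_simps)
    then have e: "e = int N * k" by (metis of_int_eq_iff of_int_mult of_int_of_nat_eq)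
    show False
    proof (cases "k = 0")
      case True then show ?thesis using e assms by simp
    next
      case False
      then have k1: "\<bar>k\<bar> \<ge> 1" by linarith
      have "\<bar>e\<bar> = int N * \<bar>k\<bar>" unfolding e abs_mult by simp
      also have "\<dots> \<ge> int N * 1" using k1 by (intro mult_left_mono) auto
      finally have "\<bar>e\<bar> \<ge> int N" by simp
      then show ?thesis using assms by simp
    qed
  qed
  have "(\<Sum>t<N. cis (2 * pi * real t * real_of_int e / real N)) = (\<Sum>t<N. \<omega> ^ t)"
    by (intro sum.cong refl) (auto simp: \<omega>_def DeMoivre mult_ac)
  also have "\<dots> = (1 - \<omega> ^ N) / (1 - \<omega>)" using ne by (simp add: sum_gp_strict)
  also have "\<omega> ^ N = cis (2 * pi * real_of_int e)" using N0 by (simp add: \<omega>_def DeMoivre)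
  also have "\<dots> = 1" by (rule cis_multiple_2pi) simp
  finally show ?thesis by simp
qed

definition vkron :: "complex vec \<Rightarrow> complex vec \<Rightarrow> complex vec" where
  "vkron a b = vec (dim_vec a * dim_vec b) (\<lambda>i. a $ (i div dim_vec b) * b $ (i mod dim_vec b))"

primrec vtpow :: "complex vec \<Rightarrow> nat \<Rightarrow> complex vec" where
  "vtpow v 0 = vec 1 (\<lambda>_. 1)"
| "vtpow v (Suc k) = vkron v (vtpow v k)"

lemma dim_vkron[simp]: "dim_vec (vkron a b) = dim_vec a * dim_vec b"
  by (simp add: vkron_def)

lemma dim_vtpow[simp]: "dim_vec (vtpow v m) = dim_vec v ^ m"
  by (induction m) auto

lemma divmod_aux: "y < (B::nat) \<Longrightarrow> (x * B + y) div B = x" "y < (B::nat) \<Longrightarrow> (x * B + y) mod B = y"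
  by simp_all

lemma vkron_index:
  assumes "x < dim_vec a" "y < dim_vec b"
  shows "vkron a b $ (x * dim_vec b + y) = a $ x * b $ y"
proof -
  have "x * dim_vec b + y < x * dim_vec b + dim_vec b" using assms by simp
  also have "\<dots> = Suc x * dim_vec b" by simp
  also have "\<dots> \<le> dim_vec a * dim_vec b" using assms by (intro mult_le_mono1) simp
  finally have "x * dim_vec b + y < dim_vec a * dim_vec b" .
  moreover have "(x * dim_vec b + y) div dim_vec b = x" "(x * dim_vec b + y) mod dim_vec b = y"
    by (rule divmod_aux(1)[OF assms(2)], rule divmod_aux(2)[OF assms(2)])
  ultimately show ?thesis using assms by (simp add: vkron_def)
qed

lemma vkron_index':
  assumes "i < dim_vec a * dim_vec b"
  shows "vkron a b $ i = a $ (i div dim_vec b) * b $ (i mod dim_vec b)"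
  using assms by (simp add: vkron_def)

lemma proj_dim[simp]: "dim_row (proj v) = dim_vec v" "dim_col (proj v) = dim_vec v"
  by (auto simp: proj_def)

lemma proj_index[simp]: "i < dim_vec v \<Longrightarrow> j < dim_vec v \<Longrightarrow> proj v $$ (i,j) = v $ i * cnj (v $ j)"
  by (simp add: proj_def)

lemma proj_carrier: "proj v \<in> carrier_mat (dim_vec v) (dim_vec v)"
  by (rule carrier_matI) simp_all

lemma kron_index: "i < dim_row A * dim_row B \<Longrightarrow> j < dim_col A * dim_col B \<Longrightarrow>
  kron A B $$ (i,j) = A $$ (i div dim_row B, j div dim_col B) * B $$ (i mod dim_row B, j mod dim_col B)"
  unfolding kron_def by simp

lemma kron_dim[simp]: "dim_row (kron A B) = dim_row A * dim_row B" "dim_col (kron A B) = dim_col A * dim_col B"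
  unfolding kron_def by simp_all

lemma kron_proj: "kron (proj a) (proj b) = proj (vkron a b)"
proof (rule eq_matI)
  fix i j assume i: "i < dim_row (proj (vkron a b))" and j: "j < dim_col (proj (vkron a b))"
  have iAB: "i < dim_vec a * dim_vec b" and jAB: "j < dim_vec a * dim_vec b" using i j by simp_all
  have B: "dim_vec b > 0" using iAB by (cases "dim_vec b = 0") auto
  have d1: "i div dim_vec b < dim_vec a" "j div dim_vec b < dim_vec a"
    using iAB jAB by (simp_all add: less_mult_imp_div_less)
  have d2: "i mod dim_vec b < dim_vec b" "j mod dim_vec b < dim_vec b" using B by auto
  have "kron (proj a) (proj b) $$ (i, j) = proj a $$ (i div dim_vec b, j div dim_vec b) * proj b $$ (i mod dim_vec b, j mod dim_vec b)"
    using kron_index[of i "proj a" "proj b" j] iAB jAB by simp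
  also have "\<dots> = (a $ (i div dim_vec b) * cnj (a $ (j div dim_vec b))) * (b $ (i mod dim_vec b) * cnj (b $ (j mod dim_vec b)))"
    using d1 d2 by simp
  also have "\<dots> = vkron a b $ i * cnj (vkron a b $ j)"
    using iAB jAB by (simp add: vkron_index')
  also have "\<dots> = proj (vkron a b) $$ (i, j)" using iAB jAB by simp
  finally show "kron (proj a) (proj b) $$ (i, j) = proj (vkron a b) $$ (i, j)" .
qed simp_all

lemma tpow_proj: "tpow (proj v) m = proj (vtpow v m)"
proof (induction m)
  case 0
  show ?case by (rule eq_matI) auto
next
  case (Suc m)
  then show ?case by (simp add: kron_proj)
qed

lemma vtpow_Suc_index:
  assumes "x < dim_vec v" "y < dim_vec v ^ m"
  shows "vtpow v (Suc m) $ (x * dim_vec v ^ m + y) = v $ x * vtpow v m $ y"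
  using vkron_index[of x v y "vtpow v m"] assms by simp

fun idx :: "nat \<Rightarrow> nat \<Rightarrow> nat \<Rightarrow> nat" where
  "idx D c 0 = 0"
| "idx D c (Suc r) = c * D ^ r + idx D c r"

lemma idx_less: "c < D \<Longrightarrow> idx D c r < D ^ r"
proof (induction r)
  case 0 then show ?case by simp
next
  case (Suc r)
  have "c * D ^ r + idx D c r < c * D^r + D^r" using Suc by simp
  also have "\<dots> = Suc c * D ^ r" by simp
  also have "\<dots> \<le> D * D ^ r" using Suc.prems by (intro mult_le_mono1) simp
  finally show ?case by simp
qed

lemma vtpow_idx: "c < dim_vec v \<Longrightarrow> vtpow v r $ idx (dim_vec v) c r = (v $ c) ^ r"
proof (induction r)
  case 0 then show ?case by simp
next
  case (Suc r)
  have "vtpow v (Suc r) $ idx (dim_vec v) c (Suc r)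
      = vtpow v (Suc r) $ (c * dim_vec v ^ r + idx (dim_vec v) c r)" by (simp only: idx.simps)
  also have "\<dots> = v $ c * vtpow v r $ idx (dim_vec v) c r"
    by (rule vtpow_Suc_index[OF Suc.prems idx_less[OF Suc.prems]])
  also have "\<dots> = (v $ c) ^ Suc r" using Suc by simp
  finally show ?case .
qed



definition mono_fam :: "(complex \<Rightarrow> complex vec) \<Rightarrow> nat \<Rightarrow> nat \<Rightarrow> bool" where
  "mono_fam v D m \<longleftrightarrow> (\<forall>z. dim_vec (v z) = D) \<and> (\<forall>i<D. \<exists>c w. w \<le> m \<and> (\<forall>z. v z $ i = c * z ^ w))"

lemma mono_vkron:
  assumes a: "mono_fam a A m1" and b: "mono_fam b B m2"
  shows "mono_fam (\<lambda>z. vkron (a z) (b z)) (A * B) (m1 + m2)"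
  unfolding mono_fam_def
proof (intro conjI allI impI)
  fix z show "dim_vec (vkron (a z) (b z)) = A * B" using a b by (simp add: mono_fam_def)
next
  fix i assume i: "i < A * B"
  have B: "B > 0" using i by (cases "B = 0") auto
  have d1: "i div B < A" using i by (simp add: less_mult_imp_div_less)
  have d2: "i mod B < B" using B by auto
  obtain c1 w1 where 1: "w1 \<le> m1" "\<forall>z. a z $ (i div B) = c1 * z ^ w1"
    using a d1 unfolding mono_fam_def by blast
  obtain c2 w2 where 2: "w2 \<le> m2" "\<forall>z. b z $ (i mod B) = c2 * z ^ w2"
    using b d2 unfolding mono_fam_def by blast
  show "\<exists>c w. w \<le> m1 + m2 \<and> (\<forall>z. vkron (a z) (b z) $ i = c * z ^ w)"
  proof (intro exI conjI allI)
    show "w1 + w2 \<le> m1 + m2" using 1 2 by simp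
    fix z
    have da: "dim_vec (a z) = A" and db: "dim_vec (b z) = B" using a b by (simp_all add: mono_fam_def)
    have "vkron (a z) (b z) $ i = a z $ (i div B) * b z $ (i mod B)"
      using vkron_index'[of i "a z" "b z"] i da db by simp
    also have "\<dots> = (c1 * c2) * z ^ (w1 + w2)" using 1 2 by (simp add: power_add mult_ac)
    finally show "vkron (a z) (b z) $ i = (c1 * c2) * z ^ (w1 + w2)" .
  qed
qed

lemma mono_const: "mono_fam (\<lambda>z. v) (dim_vec v) 0"
  unfolding mono_fam_def by (intro conjI allI impI, simp, rule_tac x="v $ i" in exI, rule_tac x=0 in exI, simp)

lemma mono_vtpow:
  assumes a: "mono_fam a A m"
  shows "mono_fam (\<lambda>z. vtpow (a z) r) (A ^ r) (m * r)"
proof (induction r)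
  case 0
  show ?case unfolding mono_fam_def
    by (intro conjI allI impI, simp, rule_tac x=1 in exI, rule_tac x=0 in exI, simp)
next
  case (Suc r)
  have "mono_fam (\<lambda>z. vkron (a z) (vtpow (a z) r)) (A * A ^ r) (m + m * r)"
    by (rule mono_vkron[OF a Suc])
  then show ?case by simp
qed

lemma weighted_entry_zero:
  assumes v: "mono_fam v D m" and mM: "m < M" and N: "m + M < N" and i: "i < D" and j: "j < D"
  shows "(\<Sum>t<N. cis (-(2 * pi * real t * real M / real N)) *
            proj (v (cis (2 * pi * real t / real N))) $$ (i, j)) = 0"
proof -
  obtain c w where cw: "w \<le> m" "\<forall>z. v z $ i = c * z ^ w" using v i unfolding mono_fam_def by blast
  obtain c' w' where cw': "w' \<le> m" "\<forall>z. v z $ j = c' * z ^ w'" using v j unfolding mono_fam_def by blast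
  define e where "e = int w - int w' - int M"
  have dimv: "\<And>z. dim_vec (v z) = D" using v by (simp add: mono_fam_def)
  have tm: "cis (-(2 * pi * real t * real M / real N)) * proj (v (cis (2 * pi * real t / real N))) $$ (i, j)
      = (c * cnj c') * cis (2 * pi * real t * real_of_int e / real N)" for t
  proof -
    define x where "x = 2 * pi * real t / real N"
    have "cis (-(2 * pi * real t * real M / real N)) * proj (v (cis x)) $$ (i, j)
        = cis (-(2 * pi * real t * real M / real N)) * ((c * cis x ^ w) * cnj (c' * cis x ^ w'))"
      using i j dimv cw cw' by simp
    also have "\<dots> = (c * cnj c') * (cis (-(2 * pi * real t * real M / real N)) * cis (real w * x) * cis (-(real w' * x)))"
      by (simp add: DeMoivre cis_cnj mult_ac)
    also have "cis (-(2 * pi * real t * real M / real N)) * cis (real w * x) * cis (-(real w' * x))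
        = cis (-(2 * pi * real t * real M / real N) + real w * x + (-(real w' * x)))"
      by (simp add: cis_mult)
    also have "-(2 * pi * real t * real M / real N) + real w * x + (-(real w' * x))
        = 2 * pi * real t * real_of_int e / real N"
      using N unfolding x_def e_def by (simp add: field_simps)
    finally show ?thesis unfolding x_def .
  qed
  have "(\<Sum>t<N. cis (-(2 * pi * real t * real M / real N)) *
            proj (v (cis (2 * pi * real t / real N))) $$ (i, j))
      = (c * cnj c') * (\<Sum>t<N. cis (2 * pi * real t * real_of_int e / real N))"
    by (simp add: tm sum_distrib_left)
  also have "(\<Sum>t<N. cis (2 * pi * real t * real_of_int e / real N)) = 0"
    by (rule root_sum_zero) (use cw cw' mM N in \<open>auto simp: e_def\<close>)
  finally show ?thesis by simp
qed

primrec msum :: "nat \<Rightarrow> (nat \<Rightarrow> complex mat) \<Rightarrow> nat \<Rightarrow> complex mat" where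
  "msum D f 0 = 0\<^sub>m D D"
| "msum D f (Suc N) = msum D f N + f N"

lemma msum_carrier: "(\<And>t. f t \<in> carrier_mat D D) \<Longrightarrow> msum D f N \<in> carrier_mat D D"
  by (induction N) auto

lemma msum_index:
  assumes "\<And>t. f t \<in> carrier_mat D D" "i < D" "j < D"
  shows "msum D f N $$ (i, j) = (\<Sum>t<N. f t $$ (i, j))"
proof (induction N)
  case 0 then show ?case using assms by simp
next
  case (Suc N)
  have "f N \<in> carrier_mat D D" by (rule assms(1))
  then show ?case using Suc assms(2,3) by simp
qed

lemma msum_linear:
  assumes add: "\<forall>A\<in>carrier_mat a a. \<forall>B\<in>carrier_mat a a. G (A + B) = G A + G B"
    and car: "\<forall>A\<in>carrier_mat a a. G A \<in> carrier_mat b b"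
    and z: "G (0\<^sub>m a a) = 0\<^sub>m b b"
    and f: "\<And>t. f t \<in> carrier_mat a a"
  shows "G (msum a f N) = msum b (\<lambda>t. G (f t)) N"
proof (induction N)
  case 0 then show ?case using z by simp
next
  case (Suc N)
  have "G (msum a f (Suc N)) = G (msum a f N) + G (f N)"
    using add msum_carrier[OF f] f by simp
  then show ?case using Suc by simp
qed



definition sq :: complex where "sq = complex_of_real (sqrt (1/2))"

definition psi :: "nat \<Rightarrow> complex \<Rightarrow> complex vec" where
  "psi d z = vec d (\<lambda>i. if i = 0 then sq else if i = 1 then sq * z else 0)"

lemma dim_psi[simp]: "dim_vec (psi d z) = d" by (simp add: psi_def)

lemma psi_index: "i < d \<Longrightarrow> psi d z $ i = (if i = 0 then sq else if i = 1 then sq * z else 0)"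
  by (simp add: psi_def)

lemma psi_mono: "mono_fam (psi d) d 1"
  unfolding mono_fam_def
proof (intro conjI allI impI)
  fix z show "dim_vec (psi d z) = d" by simp
next
  fix i assume i: "i < d"
  show "\<exists>c w. w \<le> 1 \<and> (\<forall>z. psi d z $ i = c * z ^ w)"
  proof (cases "i = 0")
    case True then show ?thesis using i by (intro exI[of _ sq] exI[of _ 0]) (simp add: psi_index)
  next
    case False
    show ?thesis
    proof (cases "i = 1")
      case True then show ?thesis using i by (intro exI[of _ sq] exI[of _ 1]) (simp add: psi_index)
    next
      case False
      then show ?thesis using i \<open>i \<noteq> 0\<close> by (intro exI[of _ 0] exI[of _ 0]) (simp add: psi_index)
    qed
  qed
qed

lemma sq_sq: "sq * sq = 1/2"
proof -
  have h: "sqrt (1/2) * sqrt (1/2) = (1/2::real)" by simp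
  show ?thesis unfolding sq_def of_real_mult[symmetric] h by simp
qed

lemma cmod_sq: "(cmod sq)\<^sup>2 = 1/2"
  by (simp add: sq_def)

lemma psi_unit:
  assumes d: "d \<ge> 2" and z: "cmod z = 1"
  shows "unit_vec_in d (psi d z)"
proof -
  define g where "g i = (cmod (psi d z $ i))\<^sup>2" for i
  have z0: "\<forall>i\<in>{..<d} - {..<2}. g i = 0"
  proof
    fix i assume "i \<in> {..<d} - {..<2}"
    then have "i < d" "i \<noteq> 0" "i \<noteq> 1" by auto
    then show "g i = 0" unfolding g_def by (simp add: psi_index)
  qed
  have "(\<Sum>i<d. g i) = (\<Sum>i<2. g i)"
    by (rule sum.mono_neutral_right) (use d z0 in auto)
  also have "\<dots> = g 0 + g 1" by (simp add: numeral_2_eq_2)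
  also have "g 0 = 1/2" using d unfolding g_def by (simp add: psi_index cmod_sq)
  also have "g 1 = 1/2" using d z unfolding g_def by (simp add: psi_index norm_mult power_mult_distrib cmod_sq)
  also have "(1/2::real) + 1/2 = 1" by simp
  finally have "(\<Sum>i<d. g i) = 1" .
  then have "vnorm (psi d z) = 1" unfolding vnorm_def g_def by simp
  moreover have "psi d z \<in> carrier_vec d" by (simp add: carrier_vecI)
  ultimately show ?thesis unfolding unit_vec_in_def by simp
qed

lemma idx0: "idx D 0 r = 0" by (induction r) simp_all

lemma psi_entry:
  assumes d: "d \<ge> 2"
  shows "cis (-(2 * pi * real t * real M / real N)) *
     proj (vtpow (psi d (cis (2 * pi * real t / real N))) M) $$ (idx d 1 M, 0) = (1/2) ^ M"
proof -
  define y where "y = 2 * pi * real t / real N"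
  define z where "z = cis y"
  have i1: "idx d 1 M < d ^ M" using d by (intro idx_less) simp
  have i0: "0 < d ^ M" using d by simp
  have a: "vtpow (psi d z) M $ idx d 1 M = (sq * z) ^ M"
    using vtpow_idx[of 1 "psi d z" M] d by (simp add: psi_index)
  have b: "vtpow (psi d z) M $ 0 = sq ^ M"
    using vtpow_idx[of 0 "psi d z" M] d by (simp add: psi_index idx0)
  have cs: "cnj sq = sq" by (simp add: sq_def)
  have "cis (-(2 * pi * real t * real M / real N)) * proj (vtpow (psi d z) M) $$ (idx d 1 M, 0)
      = cis (-(2 * pi * real t * real M / real N)) * ((sq * z) ^ M * cnj (sq ^ M))"
    using i1 i0 a b by simp
  also have "\<dots> = (sq * sq) ^ M * (cis (-(2 * pi * real t * real M / real N)) * cis (real M * y))"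
    by (simp add: z_def DeMoivre cs power_mult_distrib mult_ac)
  also have "cis (-(2 * pi * real t * real M / real N)) * cis (real M * y) = 1"
    by (simp add: cis_mult y_def)
  finally show ?thesis unfolding z_def y_def by (simp add: sq_sq)
qed

lemma prob_qt_zero:
  assumes F: "prob_qt a b F"
  shows "F (0\<^sub>m a a) = 0\<^sub>m b b"
proof -
  have car: "F (0\<^sub>m a a) \<in> carrier_mat b b" using F by (simp add: prob_qt_def)
  have "0\<^sub>m a a = (0::complex) \<cdot>\<^sub>m 0\<^sub>m a a" by (rule eq_matI) simp_all
  then have "F (0\<^sub>m a a) = 0 \<cdot>\<^sub>m F (0\<^sub>m a a)"
    using F unfolding prob_qt_def by (metis zero_carrier_mat)
  also have "\<dots> = 0\<^sub>m b b" using car by (intro eq_matI) auto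
  finally show ?thesis .
qed



lemma tpow_psi_carrier: "tpow (proj (psi d z)) k \<in> carrier_mat (d ^ k) (d ^ k)"
  unfolding tpow_proj using proj_carrier[of "vtpow (psi d z) k"] by simp

lemma cmod_cis_1: "cmod (cis x) = 1" by simp

lemma part2:
  assumes d: "d \<ge> 2" and kn: "k < n" and F: "prob_qt (d ^ k) (d ^ n) F"
    and hyp: "\<forall>\<psi>. unit_vec_in d \<psi> \<longrightarrow>
              (\<exists>p::real. p > 0 \<and> F (tpow (proj \<psi>) k) = complex_of_real p \<cdot>\<^sub>m tpow (proj \<psi>) n)"
  shows False
proof -
  define N where "N = k + n + 1"
  define z where "z t = cis (2 * pi * real t / real N)" for t
  define c where "c t = cis (-(2 * pi * real t * real n / real N))" for t
  have "\<forall>t. \<exists>p::real. p > 0 \<and> F (tpow (proj (psi d (z t))) k) = complex_of_real p \<cdot>\<^sub>m tpow (proj (psi d (z t))) n"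
  proof
    fix t
    have "unit_vec_in d (psi d (z t))" by (rule psi_unit[OF d]) (simp add: z_def)
    then show "\<exists>p::real. p > 0 \<and> F (tpow (proj (psi d (z t))) k) = complex_of_real p \<cdot>\<^sub>m tpow (proj (psi d (z t))) n"
      using hyp by blast
  qed
  from choice[OF this] obtain p where p: "\<And>t. p t > 0"
    "\<And>t. F (tpow (proj (psi d (z t))) k) = complex_of_real (p t) \<cdot>\<^sub>m tpow (proj (psi d (z t))) n"
    by blast
  have Fcar: "\<And>A. A \<in> carrier_mat (d^k) (d^k) \<Longrightarrow> F A \<in> carrier_mat (d^n) (d^n)"
    and Fadd: "\<forall>A\<in>carrier_mat (d^k) (d^k). \<forall>B\<in>carrier_mat (d^k) (d^k). F (A + B) = F A + F B"
    and Fsm: "\<And>A a. A \<in> carrier_mat (d^k) (d^k) \<Longrightarrow> F (a \<cdot>\<^sub>m A) = a \<cdot>\<^sub>m F A"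
    using F unfolding prob_qt_def by blast+
  define X where "X t = c t \<cdot>\<^sub>m tpow (proj (psi d (z t))) k" for t
  have Xc: "\<And>t. X t \<in> carrier_mat (d^k) (d^k)" unfolding X_def using tpow_psi_carrier by simp
  have mk: "mono_fam (\<lambda>z. vtpow (psi d z) k) (d^k) (1*k)" by (rule mono_vtpow[OF psi_mono])
  have MC: "msum (d^k) X N \<in> carrier_mat (d^k) (d^k)" by (rule msum_carrier) (rule Xc)
  have S0: "msum (d^k) X N = 0\<^sub>m (d^k) (d^k)"
  proof (rule eq_matI)
    fix i j assume "i < dim_row (0\<^sub>m (d ^ k) (d ^ k))" "j < dim_col (0\<^sub>m (d ^ k) (d ^ k))"
    then have i: "i < d^k" and j: "j < d^k" by simp_all
    have "msum (d^k) X N $$ (i, j) = (\<Sum>t<N. X t $$ (i, j))" by (rule msum_index[OF Xc i j])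
    also have "\<dots> = (\<Sum>t<N. cis (-(2 * pi * real t * real n / real N)) *
            proj ((\<lambda>z. vtpow (psi d z) k) (cis (2 * pi * real t / real N))) $$ (i, j))"
      using i j by (intro sum.cong refl) (simp add: X_def c_def z_def tpow_proj)
    also have "\<dots> = 0"
      by (rule weighted_entry_zero[OF mk]) (use kn i j in \<open>simp_all add: N_def\<close>)
    finally show "msum (d^k) X N $$ (i, j) = 0\<^sub>m (d ^ k) (d ^ k) $$ (i, j)" using i j by simp
  qed (use MC in auto)
  have "F (msum (d^k) X N) = msum (d^n) (\<lambda>t. F (X t)) N"
    by (rule msum_linear[OF Fadd _ prob_qt_zero[OF F] Xc]) (use Fcar in blast)
  then have S1: "msum (d^n) (\<lambda>t. F (X t)) N = 0\<^sub>m (d^n) (d^n)"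
    using S0 prob_qt_zero[OF F] by simp
  define I where "I = idx d 1 n"
  have I: "I < d^n" unfolding I_def using d by (intro idx_less) simp
  have n0: "0 < d^n" using d by simp
  have FXc: "\<And>t. F (X t) \<in> carrier_mat (d^n) (d^n)" using Fcar Xc by blast
  have FX: "F (X t) $$ (I, 0) = complex_of_real (p t) * (1/2) ^ n" for t
  proof -
    have "F (X t) = c t \<cdot>\<^sub>m (complex_of_real (p t) \<cdot>\<^sub>m tpow (proj (psi d (z t))) n)"
      unfolding X_def using Fsm[OF tpow_psi_carrier] p(2) by simp
    then have "F (X t) $$ (I, 0) = c t * (complex_of_real (p t) * proj (vtpow (psi d (z t)) n) $$ (I, 0))"
      using I n0 by (simp add: tpow_proj)
    also have "\<dots> = complex_of_real (p t) * (c t * proj (vtpow (psi d (z t)) n) $$ (I, 0))"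
      by (simp add: mult_ac)
    also have "c t * proj (vtpow (psi d (z t)) n) $$ (I, 0) = (1/2) ^ n"
      unfolding c_def z_def I_def by (rule psi_entry[OF d])
    finally show ?thesis .
  qed
  have "0 = msum (d^n) (\<lambda>t. F (X t)) N $$ (I, 0)" using S1 I n0 by simp
  also have "\<dots> = (\<Sum>t<N. F (X t) $$ (I, 0))" by (rule msum_index[OF FXc I n0])
  also have "\<dots> = complex_of_real (\<Sum>t<N. p t * (1/2) ^ n)" by (simp add: FX)
  finally have "complex_of_real (\<Sum>t<N. p t * (1/2) ^ n) = 0" by (rule sym)
  then have "(\<Sum>t<N. p t * (1/2) ^ n) = 0" using of_real_eq_0_iff by blast
  moreover have "(\<Sum>t<N. p t * (1/2) ^ n) > 0"
    by (rule sum_pos) (use p(1) in \<open>auto simp: N_def\<close>)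
  ultimately show False by simp
qed



lemma cadj_carrier: "U \<in> carrier_mat a b \<Longrightarrow> cadj U \<in> carrier_mat b a"
  unfolding cadj_def by (intro carrier_matI) auto

lemma unitary_recover:
  assumes U: "unitary_mat D U" and A: "A \<in> carrier_mat D D"
  shows "cadj U * (U * A * cadj U) * U = A"
proof -
  have Uc: "U \<in> carrier_mat D D" and 1: "cadj U * U = 1\<^sub>m D" using U unfolding unitary_mat_def by auto
  have Ua: "cadj U \<in> carrier_mat D D" using cadj_carrier[OF Uc] .
  have UA: "U * A \<in> carrier_mat D D" using Uc A by simp
  have "cadj U * (U * A * cadj U) = (cadj U * (U * A)) * cadj U"
    using assoc_mult_mat[OF Ua UA Ua] by simp
  also have "cadj U * (U * A) = (cadj U * U) * A" using assoc_mult_mat[OF Ua Uc A] by simp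
  also have "\<dots> = A" using 1 A by simp
  finally have "cadj U * (U * A * cadj U) * U = A * cadj U * U" by simp
  also have "\<dots> = A * (cadj U * U)" using assoc_mult_mat[OF A Ua Uc] by simp
  also have "\<dots> = A" using 1 A by simp
  finally show ?thesis .
qed

lemma part3:
  assumes d: "d \<ge> 2" and nk: "n < k" and z0: "unit_vec_in d z0" and U: "unitary_mat (d ^ k) U"
    and hyp: "\<forall>\<psi>. unit_vec_in d \<psi> \<longrightarrow>
              U * tpow (proj \<psi>) k * cadj U = kron (tpow (proj \<psi>) n) (tpow (proj z0) (k - n))"
  shows False
proof -
  define N where "N = k + n + 1"
  define z where "z t = cis (2 * pi * real t / real N)" for t
  define c where "c t = cis (-(2 * pi * real t * real k / real N))" for t
  define G where "G A = U * A * cadj U" for A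
  define Y where "Y t = kron (tpow (proj (psi d (z t))) n) (tpow (proj z0) (k - n))" for t
  have dz0: "dim_vec z0 = d" using z0 unfolding unit_vec_in_def by auto
  have Dk: "d ^ n * d ^ (k - n) = d ^ k" using nk by (simp add: power_add[symmetric])
  have Uc: "U \<in> carrier_mat (d^k) (d^k)" using U unfolding unitary_mat_def by auto
  have Ua: "cadj U \<in> carrier_mat (d^k) (d^k)" using cadj_carrier[OF Uc] .
  have Gcar: "\<forall>A\<in>carrier_mat (d^k) (d^k). G A \<in> carrier_mat (d^k) (d^k)"
    unfolding G_def using Uc Ua by auto
  have Gadd: "\<forall>A\<in>carrier_mat (d^k) (d^k). \<forall>B\<in>carrier_mat (d^k) (d^k). G (A + B) = G A + G B"
  proof (intro ballI)
    fix A B :: "complex mat" assume A: "A \<in> carrier_mat (d^k) (d^k)" and B: "B \<in> carrier_mat (d^k) (d^k)"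
    have "U * (A + B) = U * A + U * B" by (rule mult_add_distrib_mat[OF Uc A B])
    moreover have "(U * A + U * B) * cadj U = U * A * cadj U + U * B * cadj U"
      by (rule add_mult_distrib_mat) (use Uc A B Ua in auto)
    ultimately show "G (A + B) = G A + G B" unfolding G_def by simp
  qed
  have G0: "G (0\<^sub>m (d^k) (d^k)) = 0\<^sub>m (d^k) (d^k)"
    unfolding G_def using right_mult_zero_mat[OF Uc] left_mult_zero_mat[OF Ua] by simp
  have Gsm: "G (a \<cdot>\<^sub>m A) = a \<cdot>\<^sub>m G A" if A: "A \<in> carrier_mat (d^k) (d^k)" for a :: complex and A :: "complex mat"
  proof -
    have "U * (a \<cdot>\<^sub>m A) = a \<cdot>\<^sub>m (U * A)" by (rule mult_smult_distrib[OF Uc A])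
    moreover have "(a \<cdot>\<^sub>m (U * A)) * cadj U = a \<cdot>\<^sub>m (U * A * cadj U)"
      by (rule mult_smult_assoc_mat) (use Uc A Ua in auto)
    ultimately show ?thesis unfolding G_def by simp
  qed
  define X where "X t = c t \<cdot>\<^sub>m tpow (proj (psi d (z t))) k" for t
  have Xc: "\<And>t. X t \<in> carrier_mat (d^k) (d^k)" unfolding X_def using tpow_psi_carrier by simp
  have GX: "G (X t) = c t \<cdot>\<^sub>m Y t" for t
  proof -
    have "unit_vec_in d (psi d (z t))" by (rule psi_unit[OF d]) (simp add: z_def)
    then show ?thesis unfolding X_def Gsm[OF tpow_psi_carrier] using hyp
      by (simp add: G_def Y_def)
  qed
  have Yproj: "Y t = proj (vkron (vtpow (psi d (z t)) n) (vtpow z0 (k - n)))" for t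
    unfolding Y_def tpow_proj kron_proj ..
  have Yc: "\<And>t. c t \<cdot>\<^sub>m Y t \<in> carrier_mat (d^k) (d^k)"
  proof -
    fix t
    have "proj (vkron (vtpow (psi d (z t)) n) (vtpow z0 (k - n))) \<in> carrier_mat (d^n * d^(k-n)) (d^n * d^(k-n))"
      using proj_carrier[of "vkron (vtpow (psi d (z t)) n) (vtpow z0 (k - n))"] dz0 by simp
    then show "c t \<cdot>\<^sub>m Y t \<in> carrier_mat (d^k) (d^k)" unfolding Yproj Dk by simp
  qed
  have mn: "mono_fam (\<lambda>z. vtpow (psi d z) n) (d^n) (1*n)" by (rule mono_vtpow[OF psi_mono])
  have mz: "mono_fam (\<lambda>z. vtpow z0 (k - n)) (d^(k-n)) (0*(k-n))"
    using mono_vtpow[OF mono_const[of z0], of "k - n"] dz0 by simp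
  have mY: "mono_fam (\<lambda>z. vkron (vtpow (psi d z) n) (vtpow z0 (k - n))) (d^n * d^(k-n)) (1*n + 0*(k-n))"
    by (rule mono_vkron[OF mn mz])
  have MCY: "msum (d^k) (\<lambda>t. c t \<cdot>\<^sub>m Y t) N \<in> carrier_mat (d^k) (d^k)" by (rule msum_carrier) (rule Yc)
  have S0: "msum (d^k) (\<lambda>t. c t \<cdot>\<^sub>m Y t) N = 0\<^sub>m (d^k) (d^k)"
  proof (rule eq_matI)
    fix i j assume "i < dim_row (0\<^sub>m (d ^ k) (d ^ k))" "j < dim_col (0\<^sub>m (d ^ k) (d ^ k))"
    then have i: "i < d^k" and j: "j < d^k" by simp_all
    have "msum (d^k) (\<lambda>t. c t \<cdot>\<^sub>m Y t) N $$ (i, j) = (\<Sum>t<N. (c t \<cdot>\<^sub>m Y t) $$ (i, j))"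
      by (rule msum_index[OF Yc i j])
    also have "\<dots> = (\<Sum>t<N. cis (-(2 * pi * real t * real k / real N)) *
            proj ((\<lambda>z. vkron (vtpow (psi d z) n) (vtpow z0 (k - n))) (cis (2 * pi * real t / real N))) $$ (i, j))"
      using i j Dk dz0 by (intro sum.cong refl) (simp add: Yproj c_def z_def power_add)
    also have "\<dots> = 0"
      by (rule weighted_entry_zero[OF mY]) (use nk i j Dk in \<open>simp_all add: N_def\<close>)
    finally show "msum (d^k) (\<lambda>t. c t \<cdot>\<^sub>m Y t) N $$ (i, j) = 0\<^sub>m (d ^ k) (d ^ k) $$ (i, j)" using i j by simp
  qed (use MCY in auto)
  have "G (msum (d^k) X N) = msum (d^k) (\<lambda>t. G (X t)) N"
    by (rule msum_linear[OF Gadd Gcar G0 Xc])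
  also have "\<dots> = 0\<^sub>m (d^k) (d^k)" using S0 by (simp add: GX)
  finally have G1: "G (msum (d^k) X N) = 0\<^sub>m (d^k) (d^k)" .
  have MC: "msum (d^k) X N \<in> carrier_mat (d^k) (d^k)" by (rule msum_carrier) (rule Xc)
  have "msum (d^k) X N = cadj U * G (msum (d^k) X N) * U"
    unfolding G_def by (rule unitary_recover[OF U MC, symmetric])
  also have "\<dots> = 0\<^sub>m (d^k) (d^k)" unfolding G1
    using right_mult_zero_mat[OF Ua] left_mult_zero_mat[OF Uc] by simp
  finally have S1: "msum (d^k) X N = 0\<^sub>m (d^k) (d^k)" .
  define I where "I = idx d 1 k"
  have I: "I < d^k" unfolding I_def using d by (intro idx_less) simp
  have k0: "0 < d^k" using d by simp
  have XI: "X t $$ (I, 0) = (1/2) ^ k" for t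
  proof -
    have "X t $$ (I, 0) = c t * proj (vtpow (psi d (z t)) k) $$ (I, 0)"
      unfolding X_def using I k0 by (simp add: tpow_proj)
    also have "\<dots> = (1/2) ^ k"
      unfolding c_def z_def I_def by (rule psi_entry[OF d])
    finally show ?thesis .
  qed
  have "0 = msum (d^k) X N $$ (I, 0)" using S1 I k0 by simp
  also have "\<dots> = (\<Sum>t<N. X t $$ (I, 0))" by (rule msum_index[OF Xc I k0])
  also have "\<dots> = of_nat N * (1/2) ^ k" by (simp add: XI)
  finally have "of_nat N * (1/2 :: complex) ^ k = 0" by (rule sym)
  then have "(of_nat N :: complex) = 0" by simp
  then have "N = 0" by (simp only: of_nat_eq_0_iff)
  then show False by (simp add: N_def)
qed



lemma unit_vec_unit:
  assumes j: "j < d"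
  shows "unit_vec_in d (unit_vec d j)" "unit_vec_in d ((-1) \<cdot>\<^sub>v unit_vec d j)"
proof -
  have s1: "(\<Sum>i<d. (cmod (unit_vec d j $ i))\<^sup>2) = (\<Sum>i<d. if i = j then 1 else 0)"
    by (intro sum.cong refl) (simp add: j)
  have s2: "(\<Sum>i<d. (cmod (((-1) \<cdot>\<^sub>v unit_vec d j) $ i))\<^sup>2) = (\<Sum>i<d. if i = j then 1 else 0)"
    by (intro sum.cong refl) (simp add: j)
  have s: "(\<Sum>i<d. if i = j then 1 else (0::real)) = 1" using j by simp
  show "unit_vec_in d (unit_vec d j)" unfolding unit_vec_in_def vnorm_def
    using s1 s by (simp add: carrier_vecI)
  show "unit_vec_in d ((-1) \<cdot>\<^sub>v unit_vec d j)" unfolding unit_vec_in_def vnorm_def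
    using s2 s by (simp add: carrier_vecI)
qed

lemma proj_neg: "proj ((-1) \<cdot>\<^sub>v v) = proj v"
  by (rule eq_matI) auto

lemma vnorm_nz:
  assumes "c < dim_vec v" "v $ c \<noteq> 0"
  shows "vnorm v \<noteq> 0"
proof
  assume "vnorm v = 0"
  then have "(\<Sum>i<dim_vec v. (cmod (v $ i))\<^sup>2) = 0" unfolding vnorm_def by simp
  then have "\<forall>i\<in>{..<dim_vec v}. (cmod (v $ i))\<^sup>2 = 0"
    by (subst (asm) sum_nonneg_eq_0_iff) auto
  then show False using assms by auto
qed

lemma vtpow_entries:
  assumes c: "c < dim_vec u" and j: "j < dim_vec u"
  shows "vtpow u (Suc m) $ (j * dim_vec u ^ m + idx (dim_vec u) c m) = u $ j * (u $ c) ^ m"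
    "j * dim_vec u ^ m + idx (dim_vec u) c m < dim_vec u ^ Suc m"
proof -
  have i: "idx (dim_vec u) c m < dim_vec u ^ m" by (rule idx_less[OF c])
  show "vtpow u (Suc m) $ (j * dim_vec u ^ m + idx (dim_vec u) c m) = u $ j * (u $ c) ^ m"
    using vtpow_Suc_index[OF j i] vtpow_idx[OF c] by simp
  have "j * dim_vec u ^ m + idx (dim_vec u) c m < j * dim_vec u ^ m + dim_vec u ^ m" using i by simp
  also have "\<dots> = Suc j * dim_vec u ^ m" by simp
  also have "\<dots> \<le> dim_vec u * dim_vec u ^ m" using j by (intro mult_le_mono1) simp
  finally show "j * dim_vec u ^ m + idx (dim_vec u) c m < dim_vec u ^ Suc m" by simp
qed

lemma part1:
  assumes d: "d \<ge> 2" and n: "n > 0" and \<alpha>: "\<alpha> \<noteq> 0" and \<beta>: "\<beta> \<noteq> 0" and phi: "unit_vec_in d \<phi>"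
    and hyp: "\<forall>\<psi>. unit_vec_in d \<psi> \<and> \<alpha> \<cdot>\<^sub>v \<psi> + \<beta> \<cdot>\<^sub>v \<phi> \<noteq> 0\<^sub>v d \<longrightarrow>
              (\<exists>p::real. p > 0 \<and>
                 F (tpow (proj \<psi>) k) =
                   complex_of_real p \<cdot>\<^sub>m tpow (proj (normalize_vec (\<alpha> \<cdot>\<^sub>v \<psi> + \<beta> \<cdot>\<^sub>v \<phi>))) n)"
  shows False
proof -
  have dphi: "dim_vec \<phi> = d" using phi unfolding unit_vec_in_def by auto
  obtain c where c: "c < d" "\<phi> $ c \<noteq> 0"
  proof (rule ccontr)
    assume "\<not> ?thesis"
    then have "\<forall>i<d. \<phi> $ i = 0" using that by blast
    then have "vnorm \<phi> = 0" unfolding vnorm_def using dphi by simp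
    then show False using phi unfolding unit_vec_in_def by simp
  qed
  define j where "j = (if c = 0 then 1 else (0::nat))"
  have j: "j < d" "j \<noteq> c" using d c unfolding j_def by auto
  define e1 :: "complex vec" where "e1 = unit_vec d j"
  define e2 :: "complex vec" where "e2 = (-1) \<cdot>\<^sub>v unit_vec d j"
  have u1: "unit_vec_in d e1" and u2: "unit_vec_in d e2" unfolding e1_def e2_def using unit_vec_unit[OF j(1)] by auto
  define a where "a = \<alpha> \<cdot>\<^sub>v e1 + \<beta> \<cdot>\<^sub>v \<phi>"
  define b where "b = \<alpha> \<cdot>\<^sub>v e2 + \<beta> \<cdot>\<^sub>v \<phi>"
  define \<gamma> where "\<gamma> = \<beta> * \<phi> $ c"
  have g0: "\<gamma> \<noteq> 0" using \<beta> c by (simp add: \<gamma>_def)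
  have da: "dim_vec a = d" and db: "dim_vec b = d" by (simp_all add: a_def b_def dphi)
  have ac: "a $ c = \<gamma>" and bc: "b $ c = \<gamma>" using c j dphi by (simp_all add: a_def b_def e1_def e2_def \<gamma>_def)
  have aj: "a $ j = \<alpha> + \<beta> * \<phi> $ j" and bj: "b $ j = - \<alpha> + \<beta> * \<phi> $ j"
    using c j dphi by (simp_all add: a_def b_def e1_def e2_def)
  have a0: "a \<noteq> 0\<^sub>v d" using ac g0 c by auto
  have b0: "b \<noteq> 0\<^sub>v d" using bc g0 c by auto
  obtain p1 where p1: "p1 > 0" "F (tpow (proj e1) k) = complex_of_real p1 \<cdot>\<^sub>m tpow (proj (normalize_vec a)) n"
    using hyp u1 a0 unfolding a_def by blast
  obtain p2 where p2: "p2 > 0" "F (tpow (proj e2) k) = complex_of_real p2 \<cdot>\<^sub>m tpow (proj (normalize_vec b)) n"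
    using hyp u2 b0 unfolding b_def by blast
  have pe: "proj e2 = proj e1" unfolding e1_def e2_def by (rule proj_neg)
  define ra where "ra = complex_of_real (1 / vnorm a)"
  define rb where "rb = complex_of_real (1 / vnorm b)"
  have ra0: "ra \<noteq> 0" unfolding ra_def using vnorm_nz[of c a] ac g0 c da by simp
  have rb0: "rb \<noteq> 0" unfolding rb_def using vnorm_nz[of c b] bc g0 c db by simp
  define u where "u = normalize_vec a"
  define w where "w = normalize_vec b"
  have du: "dim_vec u = d" and dw: "dim_vec w = d" by (simp_all add: u_def w_def normalize_vec_def da db)
  have uc: "u $ c = ra * \<gamma>" and wc: "w $ c = rb * \<gamma>"
    using c da db ac bc by (simp_all add: u_def w_def normalize_vec_def ra_def rb_def)
  have uj: "u $ j = ra * a $ j" and wj: "w $ j = rb * b $ j"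
    using j da db by (simp_all add: u_def w_def normalize_vec_def ra_def rb_def)
  have EQ: "complex_of_real p1 \<cdot>\<^sub>m proj (vtpow u n) = complex_of_real p2 \<cdot>\<^sub>m proj (vtpow w n)"
  proof -
    have "complex_of_real p1 \<cdot>\<^sub>m tpow (proj u) n = complex_of_real p2 \<cdot>\<^sub>m tpow (proj w) n"
      using p1(2) p2(2) pe unfolding u_def w_def by simp
    then show ?thesis unfolding tpow_proj .
  qed
  obtain m where m: "n = Suc m" using n by (cases n) auto
  define I where "I = j * d ^ m + idx d c m"
  define J where "J = idx d c n"
  have I: "I < d ^ n" using vtpow_entries(2)[of c u j m] c j du unfolding I_def m by simp
  have J: "J < d ^ n" unfolding J_def by (rule idx_less[OF c(1)])
  have uI: "vtpow u n $ I = u $ j * (u $ c) ^ m" using vtpow_entries(1)[of c u j m] c j du unfolding I_def m by simp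
  have wI: "vtpow w n $ I = w $ j * (w $ c) ^ m" using vtpow_entries(1)[of c w j m] c j dw unfolding I_def m by simp
  have uJ: "vtpow u n $ J = (u $ c) ^ n" using vtpow_idx[of c u n] c du unfolding J_def by simp
  have wJ: "vtpow w n $ J = (w $ c) ^ n" using vtpow_idx[of c w n] c dw unfolding J_def by simp
  have "(complex_of_real p1 \<cdot>\<^sub>m proj (vtpow u n)) $$ (J, J) = (complex_of_real p2 \<cdot>\<^sub>m proj (vtpow w n)) $$ (J, J)"
    using EQ by simp
  then have E1: "complex_of_real p1 * ((u $ c) ^ n * cnj ((u $ c) ^ n)) = complex_of_real p2 * ((w $ c) ^ n * cnj ((w $ c) ^ n))"
    using J du dw uJ wJ by simp
  have "(complex_of_real p1 \<cdot>\<^sub>m proj (vtpow u n)) $$ (I, J) = (complex_of_real p2 \<cdot>\<^sub>m proj (vtpow w n)) $$ (I, J)"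
    using EQ by simp
  then have E2: "complex_of_real p1 * ((u $ j * (u $ c) ^ m) * cnj ((u $ c) ^ n)) = complex_of_real p2 * ((w $ j * (w $ c) ^ m) * cnj ((w $ c) ^ n))"
    using I J du dw uI wI uJ wJ by simp
  define P1 where "P1 = complex_of_real p1 * ((u $ c) ^ n * cnj ((u $ c) ^ n))"
  define P2 where "P2 = complex_of_real p2 * ((w $ c) ^ n * cnj ((w $ c) ^ n))"
  have P1nz: "P1 \<noteq> 0" unfolding P1_def using p1(1) uc ra0 g0 by simp
  have "\<gamma> * (complex_of_real p1 * ((u $ j * (u $ c) ^ m) * cnj ((u $ c) ^ n)))
      = \<gamma> * (complex_of_real p2 * ((w $ j * (w $ c) ^ m) * cnj ((w $ c) ^ n)))" using E2 by simp
  moreover have "\<gamma> * (complex_of_real p1 * ((u $ j * (u $ c) ^ m) * cnj ((u $ c) ^ n))) = a $ j * P1"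
    unfolding P1_def uj uc m by (simp add: mult_ac)
  moreover have "\<gamma> * (complex_of_real p2 * ((w $ j * (w $ c) ^ m) * cnj ((w $ c) ^ n))) = b $ j * P2"
    unfolding P2_def wj wc m by (simp add: mult_ac)
  ultimately have "a $ j * P1 = b $ j * P2" by metis
  moreover have "P1 = P2" using E1 unfolding P1_def P2_def .
  ultimately have "a $ j = b $ j" using P1nz by simp
  then have "\<alpha> = - \<alpha>" using aj bj by simp
  then show False using \<alpha> by simp
qed


theorem theorem3:
  fixes d k n :: nat and \<alpha> \<beta> :: complex and \<phi> :: "complex vec"
  assumes "d \<ge> 2" and "k > 0" and "n > 0"
    and "(cmod \<alpha>)\<^sup>2 + (cmod \<beta>)\<^sup>2 = 1" and "cmod \<beta> \<noteq> 1"
    and "unit_vec_in d \<phi>"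
  shows
   "(0 < cmod \<beta> \<and> cmod \<beta> < 1 \<longrightarrow>
      \<not> (\<exists>F. prob_qt (d ^ k) (d ^ n) F \<and>
           (\<forall>\<psi>. unit_vec_in d \<psi> \<and> \<alpha> \<cdot>\<^sub>v \<psi> + \<beta> \<cdot>\<^sub>v \<phi> \<noteq> 0\<^sub>v d \<longrightarrow>
              (\<exists>p::real. p > 0 \<and>
                 F (tpow (proj \<psi>) k) =
                   complex_of_real p \<cdot>\<^sub>m tpow (proj (normalize_vec (\<alpha> \<cdot>\<^sub>v \<psi> + \<beta> \<cdot>\<^sub>v \<phi>))) n))))
    \<and> (\<beta> = 0 \<and> n > k \<longrightarrow>
      \<not> (\<exists>F. prob_qt (d ^ k) (d ^ n) F \<and>
           (\<forall>\<psi>. unit_vec_in d \<psi> \<longrightarrow>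
              (\<exists>p::real. p > 0 \<and>
                 F (tpow (proj \<psi>) k) = complex_of_real p \<cdot>\<^sub>m tpow (proj \<psi>) n))))
    \<and> (\<beta> = 0 \<and> n < k \<longrightarrow>
      (\<forall>z. unit_vec_in d z \<longrightarrow>
        \<not> (\<exists>U. unitary_mat (d ^ k) U \<and>
           (\<forall>\<psi>. unit_vec_in d \<psi> \<longrightarrow>
              U * tpow (proj \<psi>) k * cadj U = kron (tpow (proj \<psi>) n) (tpow (proj z) (k - n))))))"
  proof (intro conjI impI)
  assume b: "0 < cmod \<beta> \<and> cmod \<beta> < 1"
  have a0: "\<alpha> \<noteq> 0"
  proof
    assume "\<alpha> = 0"
    then have "(cmod \<beta>)\<^sup>2 = 1" using assms(4) by simp
    then have "cmod \<beta> = 1" using norm_ge_zero[of \<beta>] by (auto simp add: power2_eq_1_iff)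
    then show False using b by simp
  qed
  have b0: "\<beta> \<noteq> 0" using b by auto
  show "\<not> (\<exists>F. prob_qt (d ^ k) (d ^ n) F \<and>
           (\<forall>\<psi>. unit_vec_in d \<psi> \<and> \<alpha> \<cdot>\<^sub>v \<psi> + \<beta> \<cdot>\<^sub>v \<phi> \<noteq> 0\<^sub>v d \<longrightarrow>
              (\<exists>p::real. p > 0 \<and>
                 F (tpow (proj \<psi>) k) =
                   complex_of_real p \<cdot>\<^sub>m tpow (proj (normalize_vec (\<alpha> \<cdot>\<^sub>v \<psi> + \<beta> \<cdot>\<^sub>v \<phi>))) n)))"
  proof
    assume "\<exists>F. prob_qt (d ^ k) (d ^ n) F \<and>
           (\<forall>\<psi>. unit_vec_in d \<psi> \<and> \<alpha> \<cdot>\<^sub>v \<psi> + \<beta> \<cdot>\<^sub>v \<phi> \<noteq> 0\<^sub>v d \<longrightarrow>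
              (\<exists>p::real. p > 0 \<and>
                 F (tpow (proj \<psi>) k) =
                   complex_of_real p \<cdot>\<^sub>m tpow (proj (normalize_vec (\<alpha> \<cdot>\<^sub>v \<psi> + \<beta> \<cdot>\<^sub>v \<phi>))) n))"
    then obtain F where "\<forall>\<psi>. unit_vec_in d \<psi> \<and> \<alpha> \<cdot>\<^sub>v \<psi> + \<beta> \<cdot>\<^sub>v \<phi> \<noteq> 0\<^sub>v d \<longrightarrow>
              (\<exists>p::real. p > 0 \<and>
                 F (tpow (proj \<psi>) k) =
                   complex_of_real p \<cdot>\<^sub>m tpow (proj (normalize_vec (\<alpha> \<cdot>\<^sub>v \<psi> + \<beta> \<cdot>\<^sub>v \<phi>))) n)"
      by blast
    then show False by (rule part1[OF assms(1) assms(3) a0 b0 assms(6)])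
  qed
next
  assume b: "\<beta> = 0 \<and> n > k"
  show "\<not> (\<exists>F. prob_qt (d ^ k) (d ^ n) F \<and>
           (\<forall>\<psi>. unit_vec_in d \<psi> \<longrightarrow>
              (\<exists>p::real. p > 0 \<and>
                 F (tpow (proj \<psi>) k) = complex_of_real p \<cdot>\<^sub>m tpow (proj \<psi>) n)))"
    using part2[OF assms(1)] b by blast
next
  assume b: "\<beta> = 0 \<and> n < k"
  show "\<forall>z. unit_vec_in d z \<longrightarrow>
        \<not> (\<exists>U. unitary_mat (d ^ k) U \<and>
           (\<forall>\<psi>. unit_vec_in d \<psi> \<longrightarrow>
              U * tpow (proj \<psi>) k * cadj U = kron (tpow (proj \<psi>) n) (tpow (proj z) (k - n))))"
    using part3[OF assms(1)] b by blast
qed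

end
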